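(* Assume (A1) and that $b\in\mathcal C^1_{\mathcal P}(\mathbb R^d\times\mathring\Theta)$. Then the deterministic function $[0,T]\ni s\mapsto X^0_s\in\mathbb R^d$ has bounded variation on $[0,T]$.
   Context: Fix $T>0$, $\alpha\in(1/2,1)$, $K(u)=\frac{u^{\alpha-1}}{\Gamma(\alpha)}\mathbf 1_{u>0}$. Let $\Theta\subset\mathbb R^{d_\Theta}$ be compact and convex with nonempty interior $\mathring\Theta$, $\theta^\star\in\mathring\Theta$, $x_0\in\mathbb R^d$, $a:\mathbb R^d\to\mathbb R^{d\times r}$, $b:\mathbb R^d\times\Theta\to\mathbb R^d$. Assumption (A1): $a$ and $b$ are continuous and there is $C>0$ with $|a(x)-a(x')|\le C|x-x'|$ and $|b(x,\theta)-b(x',\theta)|\le C|x-x'|$ for all $x,x'$, $\theta$. $X^0$ denotes the solution on $[0,T]$ of the deterministic Volterra equation $X^0_t=x_0+\int_0^tK(t-s)b(X^0_s,\theta^\star)\,ds$. For an integer $k\ge1$, $\mathcal C^k_{\mathcal P}(\mathbb R^d\times\mathring\Theta,E)$ is the set of $f:\mathbb R^d\times\mathring\Theta\to E$ ($E$ finite-dimensional) such that all partial derivatives $\partial^{i+j}f/\partial x^i\partial\theta^j$ with $0\le i+j\le k$ exist, are continuous on $\mathbb R^d\times\mathring\Theta$, and satisfy $\sup_{\theta\in\mathring\Theta}\|\partial^{i+j}f(x,\theta)/\partial x^i\partial\theta^j\|\le c(1+|x|^c)$ for some $c>0$. *)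

theory Defs
  imports "HOL-Analysis.Analysis"
begin

definition frac_kernel :: "real \<Rightarrow> real \<Rightarrow> real" where
  "frac_kernel \<alpha> u = (if u > 0 then u powr (\<alpha> - 1) / Gamma \<alpha> else 0)"

definition bounded_variation_on ::
  "real \<Rightarrow> real \<Rightarrow> (real \<Rightarrow> 'e::real_normed_vector) \<Rightarrow> bool" where
  "bounded_variation_on a b f \<longleftrightarrow>
     (\<exists>M. \<forall>(n::nat) (t::nat \<Rightarrow> real).
        (\<forall>i\<le>n. t i \<in> {a..b}) \<and> (\<forall>i<n. t i \<le> t (Suc i)) \<longrightarrow>
        (\<Sum>i<n. norm (f (t (Suc i)) - f (t i))) \<le> M)"

definition C1P ::
  "(real^'d \<Rightarrow> real^'k \<Rightarrow> 'e::euclidean_space) \<Rightarrow> (real^'k) set \<Rightarrow> bool" where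
  "C1P f U \<longleftrightarrow>
     (\<exists>(Dx :: real^'d \<Rightarrow> real^'k \<Rightarrow> ((real^'d) \<Rightarrow>\<^sub>L 'e))
       (D\<theta> :: real^'d \<Rightarrow> real^'k \<Rightarrow> ((real^'k) \<Rightarrow>\<^sub>L 'e)) (c::real).
        c > 0 \<and>
        (\<forall>x. \<forall>\<theta>\<in>U.
           ((\<lambda>y. f y \<theta>) has_derivative blinfun_apply (Dx x \<theta>)) (at x) \<and>
           ((\<lambda>\<eta>. f x \<eta>) has_derivative blinfun_apply (D\<theta> x \<theta>)) (at \<theta>)) \<and>
        continuous_on (UNIV \<times> U) (\<lambda>(x, \<theta>). f x \<theta>) \<and>
        continuous_on (UNIV \<times> U) (\<lambda>(x, \<theta>). Dx x \<theta>) \<and>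
        continuous_on (UNIV \<times> U) (\<lambda>(x, \<theta>). D\<theta> x \<theta>) \<and>
        (\<forall>x. \<forall>\<theta>\<in>U.
           norm (f x \<theta>) \<le> c * (1 + norm x powr c) \<and>
           norm (Dx x \<theta>) \<le> c * (1 + norm x powr c) \<and>
           norm (D\<theta> x \<theta>) \<le> c * (1 + norm x powr c)))"

end

theory Submission
  imports Defs
begin

lemma flip_int:
  fixes F :: "real \<Rightarrow> 'a::euclidean_space"
  assumes "(F has_integral I) {0..t}"
  shows "((\<lambda>u. F (t - u)) has_integral I) {0..t}"
proof -
  have "((\<lambda>x. F (x + t)) has_integral I) {0-t..t-t}"
    using has_integral_shift_real_ivl[OF assms] .
  then have "((\<lambda>x. F (-x + t)) has_integral I) {-(t-t)..-(0-t)}"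
    by (subst has_integral_reflect_real) simp
  then show ?thesis by (simp add: algebra_simps)
qed

lemma kernel_int:
  assumes "0 < \<alpha>" "0 \<le> x"
  shows "(frac_kernel \<alpha> has_integral x powr \<alpha> / (\<alpha> * Gamma \<alpha>)) {0..x}"
proof -
  have "((\<lambda>u. u powr (\<alpha> - 1)) has_integral x powr (\<alpha> - 1 + 1) / (\<alpha> - 1 + 1)) {0..x}"
    using has_integral_powr_from_0[of "\<alpha> - 1" x] assms by simp
  then have "((\<lambda>u. u powr (\<alpha> - 1) / Gamma \<alpha>) has_integral (x powr \<alpha> / \<alpha>) / Gamma \<alpha>) {0..x}"
    by (intro has_integral_divide) simp
  then have "((\<lambda>u. u powr (\<alpha> - 1) / Gamma \<alpha>) has_integral x powr \<alpha> / (\<alpha> * Gamma \<alpha>)) {0..x}"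
    by (simp add: field_simps)
  then show ?thesis
    by (rule has_integral_eq[rotated]) (auto simp: frac_kernel_def)
qed

theorem mainTheorem8:
  fixes T \<alpha> :: real
    and \<Theta> :: "(real^'k) set" and \<theta>s :: "real^'k"
    and x0 :: "real^'d"
    and a :: "real^'d \<Rightarrow> real^'r^'d"
    and b :: "real^'d \<Rightarrow> real^'k \<Rightarrow> real^'d"
    and X0 :: "real \<Rightarrow> real^'d"
  assumes T_pos: "T > 0"
    and alpha: "1/2 < \<alpha>" "\<alpha> < 1"
    and Theta: "compact \<Theta>" "convex \<Theta>" "interior \<Theta> \<noteq> {}"
    and theta_star: "\<theta>s \<in> interior \<Theta>"
    and A1_cont: "continuous_on UNIV a" "continuous_on (UNIV \<times> \<Theta>) (\<lambda>(x, \<theta>). b x \<theta>)"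
    and A1_lip: "\<exists>C>0. \<forall>x x'. norm (a x - a x') \<le> C * norm (x - x') \<and>
                   (\<forall>\<theta>\<in>\<Theta>. norm (b x \<theta> - b x' \<theta>) \<le> C * norm (x - x'))"
    and b_C1P: "C1P b (interior \<Theta>)"
    and X0_cont: "continuous_on {0..T} X0"
    and X0_eq: "\<forall>t\<in>{0..T}.
       ((\<lambda>s. frac_kernel \<alpha> (t - s) *\<^sub>R b (X0 s) \<theta>s) has_integral (X0 t - x0)) {0..t}"
  shows "bounded_variation_on 0 T X0"
proof -
  obtain C where C0: "C > 0" and Clip: "\<forall>x x'. norm (a x - a x') \<le> C * norm (x - x') \<and>
                   (\<forall>\<theta>\<in>\<Theta>. norm (b x \<theta> - b x' \<theta>) \<le> C * norm (x - x'))"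
    using A1_lip by blast
  have ths: "\<theta>s \<in> \<Theta>" using theta_star interior_subset by blast
  define g where "g s = b (X0 s) \<theta>s" for s
  have glip: "norm (g s - g s') \<le> C * norm (X0 s - X0 s')" for s s'
    using Clip ths unfolding g_def by blast
  have "compact (X0 ` {0..T})"
    by (rule compact_continuous_image[OF X0_cont]) simp
  then obtain M where M: "\<And>s. s \<in> {0..T} \<Longrightarrow> norm (X0 s) \<le> M"
    using compact_imp_bounded bounded_iff by (metis imageI)
  define G where "G = norm (g 0) + 2 * C * M"
  have gbd: "norm (g s) \<le> G" if "s \<in> {0..T}" for s
  proof -
    have "norm (g s) \<le> norm (g 0) + norm (g s - g 0)" by (metis norm_triangle_sub)
    also have "norm (g s - g 0) \<le> C * norm (X0 s - X0 0)" by (rule glip)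
    also have "norm (X0 s - X0 0) \<le> 2 * M"
      using M[OF that] M[of 0] T_pos norm_triangle_ineq4[of "X0 s" "X0 0"] by auto
    finally show ?thesis using C0 unfolding G_def by (simp add: mult_left_mono)
  qed
  have "norm (g 0) \<le> G" using gbd[of 0] T_pos by simp
  then have G0: "G \<ge> 0" using norm_ge_zero[of "g 0"] by linarith
  define K where "K = frac_kernel \<alpha>"
  have Gam: "Gamma \<alpha> > 0" using alpha by (intro Gamma_real_pos) simp
  have Knn: "K u \<ge> 0" for u
    unfolding K_def frac_kernel_def using Gam by auto
  define kf where "kf x = x powr \<alpha> / (\<alpha> * Gamma \<alpha>)" for x
  have Kint: "(K has_integral kf x) {0..x}" if "0 \<le> x" for x
    unfolding K_def kf_def using kernel_int[of \<alpha> x] alpha that by simp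
  define kT where "kT = kf T"
  have kT0: "kT \<ge> 0" unfolding kT_def kf_def using Gam alpha by simp
  define f where "f t u = (if u \<in> {0..t} then K u *\<^sub>R g (t - u) else 0)" for t u
  have fint: "(f t has_integral (X0 t - x0)) {0..T}" if "t \<in> {0..T}" for t
  proof -
    have "((\<lambda>s. K (t - s) *\<^sub>R g s) has_integral (X0 t - x0)) {0..t}"
      using X0_eq that unfolding K_def g_def by blast
    from flip_int[OF this] have "((\<lambda>u. K u *\<^sub>R g (t - u)) has_integral (X0 t - x0)) {0..t}"
      by simp
    then have "((\<lambda>u. K u *\<^sub>R g (t - u)) has_integral (X0 t - x0)) (cbox 0 t)"
      by simp
    then have "((\<lambda>u. if u \<in> cbox 0 t then K u *\<^sub>R g (t - u) else 0) has_integral (X0 t - x0)) (cbox 0 T)"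
      by (rule has_integral_restrict_closed_subinterval) (use that in auto)
    then show ?thesis unfolding f_def by simp
  qed
  have fdiff: "norm (f b' u - f a' u) \<le> K u * (G * ((if u \<le> b' then 1 else 0) - (if u \<le> a' then 1 else 0))
      + C * norm (X0 (max (b' - u) 0) - X0 (max (a' - u) 0)))"
    if "0 \<le> a'" "a' \<le> b'" "b' \<le> T" "0 \<le> u" for a' b' u
  proof -
    consider "u \<le> a'" | "a' < u" "u \<le> b'" | "b' < u" by linarith
    then show ?thesis
    proof cases
      case 1
      then have "f b' u - f a' u = K u *\<^sub>R (g (b' - u) - g (a' - u))"
        using that unfolding f_def by (simp add: scaleR_diff_right)
      then have "norm (f b' u - f a' u) = K u * norm (g (b' - u) - g (a' - u))"
        using Knn[of u] by simp
      also have "\<dots> \<le> K u * (C * norm (X0 (b' - u) - X0 (a' - u)))"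
        using glip Knn[of u] by (intro mult_left_mono) auto
      finally show ?thesis using 1 that by simp
    next
      case 2
      then have "norm (f b' u - f a' u) = K u * norm (g (b' - u))"
        using that Knn[of u] unfolding f_def by simp
      also have "\<dots> \<le> K u * G"
        using gbd[of "b' - u"] 2 that Knn[of u] by (intro mult_left_mono) auto
      finally show ?thesis using 2 that Knn[of u] C0
        by (simp add: mult_left_mono add_increasing2 ring_distribs)
    next
      case 3
      then show ?thesis using that Knn[of u] C0 unfolding f_def by simp
    qed
  qed
  define c0 where "c0 = \<alpha> * Gamma \<alpha> / (2 * C)"
  have c0pos: "c0 > 0" unfolding c0_def using alpha Gam C0 by simp
  define \<delta> where "\<delta> = min T (c0 powr (1 / \<alpha>))"
  have d0: "\<delta> > 0" unfolding \<delta>_def using T_pos c0pos by simp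
  have dT: "\<delta> \<le> T" unfolding \<delta>_def by simp
  have "\<delta> powr \<alpha> \<le> (c0 powr (1 / \<alpha>)) powr \<alpha>"
    using d0 alpha by (intro powr_mono2) (auto simp: \<delta>_def)
  also have "\<dots> = c0" using alpha c0pos by (simp add: powr_powr)
  finally have "\<delta> powr \<alpha> \<le> c0" .
  then have Ckd: "C * kf \<delta> \<le> 1 / 2"
    unfolding kf_def c0_def using C0 alpha Gam by (simp add: field_simps)
  define step where "step x = 2 * G * kT + 2 * C * kT * x" for x
  define B where "B m = (step ^^ m) 0" for m
  obtain m :: nat where m: "T / \<delta> \<le> real m" using real_arch_simple by blast
  have TmD: "T \<le> real m * \<delta>" using m d0 by (simp add: field_simps)
  show ?thesis
    unfolding bounded_variation_on_def
  proof (intro exI allI impI)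
    fix n :: nat and t :: "nat \<Rightarrow> real"
    assume tP: "(\<forall>i\<le>n. t i \<in> {0..T}) \<and> (\<forall>i<n. t i \<le> t (Suc i))"
    define Part where "Part r = {t :: nat \<Rightarrow> real. (\<forall>i\<le>n. t i \<in> {0..r}) \<and> (\<forall>i<n. t i \<le> t (Suc i))}" for r
    define S where "S t = (\<Sum>i<n. norm (X0 (t (Suc i)) - X0 (t i)))" for t
    define \<phi> where "\<phi> r = Sup (S ` Part r)" for r
    have Pne: "Part r \<noteq> {}" if "0 \<le> r" for r
      using that unfolding Part_def by (rule_tac ex_in_conv[THEN iffD1, OF exI[of _ "\<lambda>_. 0"]]) auto
    have Snn: "S t' \<ge> 0" for t' unfolding S_def by (simp add: sum_nonneg)
    have bdd: "bdd_above (S ` Part r)" if "r \<le> T" for r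
    proof (rule bdd_aboveI2)
      fix t' assume "t' \<in> Part r"
      then have "\<forall>i\<le>n. t' i \<in> {0..T}" using that unfolding Part_def by auto
      then have "norm (X0 (t' (Suc i)) - X0 (t' i)) \<le> 2 * M" if "i < n" for i
        using M[of "t' (Suc i)"] M[of "t' i"] that norm_triangle_ineq4[of "X0 (t' (Suc i))" "X0 (t' i)"]
        by auto
      then have "S t' \<le> real (card {..<n}) * (2 * M)"
        unfolding S_def by (intro sum_bounded_above) auto
      then show "S t' \<le> real n * (2 * M)" by simp
    qed
    have Sle: "S t' \<le> \<phi> r" if "t' \<in> Part r" "r \<le> T" for t' r
      unfolding \<phi>_def using bdd[OF that(2)] that(1) by (rule cSUP_upper2) simp
    have \<phi>mono: "\<phi> r \<le> \<phi> r'" if "0 \<le> r" "r \<le> r'" "r' \<le> T" for r r'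
      unfolding \<phi>_def
      by (rule cSUP_subset_mono) (use Pne[OF that(1)] bdd[OF that(3)] that in \<open>auto simp: Part_def\<close>)
    have \<phi>0: "\<phi> r \<ge> 0" if "0 \<le> r" "r \<le> T" for r
      using Sle[of "\<lambda>_. 0" r] Snn[of "\<lambda>_. 0"] that unfolding Part_def by auto
    have \<phi>zero: "\<phi> 0 \<le> 0"
      unfolding \<phi>_def
    proof (rule cSUP_least)
      show "Part 0 \<noteq> {}" using Pne by simp
      fix t' assume "t' \<in> Part 0"
      then have "\<forall>i\<le>n. t' i = 0" unfolding Part_def by auto
      then show "S t' \<le> 0" unfolding S_def by simp
    qed
    have key: "\<phi> r \<le> step (\<phi> (max (r - \<delta>) 0))" if r: "0 \<le> r" "r \<le> T" for r
    proof -
      define r' where "r' = max (r - \<delta>) 0"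
      have r': "0 \<le> r'" "r' \<le> r" "r' \<le> T" using r d0 unfolding r'_def by auto
      have main: "S t' \<le> G * kT + C * \<phi> r * kf \<delta> + C * \<phi> r' * kT" if tp: "t' \<in> Part r" for t'
      proof -
        have tp1: "\<And>i. i \<le> n \<Longrightarrow> t' i \<in> {0..r}" and tp2: "\<And>i. i < n \<Longrightarrow> t' i \<le> t' (Suc i)"
          using tp unfolding Part_def by auto
        define I where "I i = X0 (t' (Suc i)) - X0 (t' i)" for i
        define d where "d i u = f (t' (Suc i)) u - f (t' i) u" for i u
        have dint: "(d i has_integral I i) {0..T}" if "i < n" for i
        proof -
          have "(d i has_integral ((X0 (t' (Suc i)) - x0) - (X0 (t' i) - x0))) {0..T}"
            unfolding d_def using tp1[of i] tp1[of "Suc i"] that r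
            by (intro has_integral_diff fint) auto
          then show ?thesis unfolding I_def by simp
        qed
        have dint2: "((\<lambda>u. d i u \<bullet> sgn (I i)) has_integral norm (I i)) {0..T}" if "i < n" for i
        proof -
          have "(((\<lambda>x. x \<bullet> sgn (I i)) \<circ> d i) has_integral (I i \<bullet> sgn (I i))) {0..T}"
            by (rule has_integral_linear[OF dint[OF that]]) (rule bounded_linear_inner_left)
          moreover have "I i \<bullet> sgn (I i) = norm (I i)"
            by (cases "I i = 0") (simp_all add: sgn_div_norm inner_commute dot_square_norm power2_eq_square)
          ultimately show ?thesis by (simp add: o_def)
        qed
        have sumint: "((\<lambda>u. \<Sum>i<n. d i u \<bullet> sgn (I i)) has_integral S t') {0..T}"
          unfolding S_def I_def[symmetric] by (rule has_integral_sum) (use dint2 in auto)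
        define Bd where "Bd u = G * K u + C * \<phi> r * (if u \<in> {0..\<delta>} then K u else 0) + C * \<phi> r' * K u" for u
        have Bdint: "(Bd has_integral G * kT + C * \<phi> r * kf \<delta> + C * \<phi> r' * kT) {0..T}"
        proof -
          have k1: "(K has_integral kT) {0..T}" unfolding kT_def using Kint T_pos by simp
          have "((\<lambda>u. if u \<in> cbox 0 \<delta> then K u else 0) has_integral kf \<delta>) (cbox 0 T)"
            by (rule has_integral_restrict_closed_subinterval) (use Kint[of \<delta>] d0 dT in auto)
          then have k2: "((\<lambda>u. if u \<in> {0..\<delta>} then K u else 0) has_integral kf \<delta>) {0..T}"
            by simp
          show ?thesis unfolding Bd_def
            by (intro has_integral_add has_integral_mult_right k1 k2)
        qed
        have pw: "(\<Sum>i<n. d i u \<bullet> sgn (I i)) \<le> Bd u" if u: "u \<in> {0..T}" for u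
        proof -
          define cc where "cc j = (if u \<le> t' j then 1 else 0 :: real)" for j
          define s where "s j = max (t' j - u) 0" for j
          have sP: "s \<in> Part (max (r - u) 0)"
          proof -
            have "s i \<in> {0..max (r - u) 0}" if "i \<le> n" for i
              using tp1[OF that] unfolding s_def by auto
            moreover have "s i \<le> s (Suc i)" if "i < n" for i
              using tp2[OF that] unfolding s_def by auto
            ultimately show ?thesis unfolding Part_def by blast
          qed
          have "(\<Sum>i<n. d i u \<bullet> sgn (I i)) \<le> (\<Sum>i<n. norm (d i u))"
          proof (rule sum_mono)
            fix i
            have "d i u \<bullet> sgn (I i) \<le> norm (d i u) * norm (sgn (I i))" by (rule norm_cauchy_schwarz)
            also have "\<dots> \<le> norm (d i u)" by (simp add: norm_sgn mult_left_le)
            finally show "d i u \<bullet> sgn (I i) \<le> norm (d i u)" .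
          qed
          also have "\<dots> \<le> (\<Sum>i<n. K u * (G * (cc (Suc i) - cc i) + C * norm (X0 (s (Suc i)) - X0 (s i))))"
          proof (rule sum_mono)
            fix i assume "i \<in> {..<n}"
            then show "norm (d i u) \<le> K u * (G * (cc (Suc i) - cc i) + C * norm (X0 (s (Suc i)) - X0 (s i)))"
              unfolding d_def cc_def s_def
              using fdiff[of "t' i" "t' (Suc i)" u] tp1[of i] tp1[of "Suc i"] tp2[of i] u r by auto
          qed
          also have "\<dots> = K u * (G * (\<Sum>i<n. cc (Suc i) - cc i) + C * S s)"
            unfolding S_def by (simp add: sum_distrib_left sum.distrib distrib_left)
          also have "(\<Sum>i<n. cc (Suc i) - cc i) = cc n - cc 0" by (rule sum_lessThan_telescope)
          also have "K u * (G * (cc n - cc 0) + C * S s) \<le> K u * (G + C * \<phi> (max (r - u) 0))"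
          proof (rule mult_left_mono[OF _ Knn])
            have "cc n - cc 0 \<le> 1" unfolding cc_def by auto
            then have "G * (cc n - cc 0) \<le> G" using G0 by (simp add: mult_left_le)
            moreover have "S s \<le> \<phi> (max (r - u) 0)" using Sle[OF sP] r u by auto
            ultimately show "G * (cc n - cc 0) + C * S s \<le> G + C * \<phi> (max (r - u) 0)"
              using C0 by (simp add: add_mono mult_left_mono)
          qed
          also have "\<dots> \<le> Bd u"
          proof (cases "u \<le> \<delta>")
            case True
            have "\<phi> (max (r - u) 0) \<le> \<phi> r" using \<phi>mono[of "max (r - u) 0" r] r u by auto
            then have "K u * (G + C * \<phi> (max (r - u) 0)) \<le> K u * (G + C * \<phi> r)"
              using C0 Knn[of u] by (simp add: mult_left_mono)
            also have "\<dots> \<le> Bd u" unfolding Bd_def using True u Knn[of u] C0 \<phi>0[OF r'(1,3)]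
              by (simp add: ring_distribs)
            finally show ?thesis .
          next
            case False
            have "\<phi> (max (r - u) 0) \<le> \<phi> r'" using \<phi>mono[of "max (r - u) 0" r'] r' False unfolding r'_def by auto
            then have "K u * (G + C * \<phi> (max (r - u) 0)) \<le> K u * (G + C * \<phi> r')"
              using C0 Knn[of u] by (simp add: mult_left_mono)
            also have "\<dots> \<le> Bd u" unfolding Bd_def using False u Knn[of u] C0
              by (simp add: ring_distribs)
            finally show ?thesis .
          qed
          finally show ?thesis .
        qed
        show ?thesis by (rule has_integral_le[OF sumint Bdint pw])
      qed
      have "\<phi> r \<le> G * kT + C * \<phi> r * kf \<delta> + C * \<phi> r' * kT"
      proof -
        have "Sup (S ` Part r) \<le> G * kT + C * \<phi> r * kf \<delta> + C * \<phi> r' * kT"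
          by (rule cSUP_least) (use Pne[OF r(1)] main in auto)
        then show ?thesis unfolding \<phi>_def[of r] .
      qed
      moreover have "C * \<phi> r * kf \<delta> \<le> \<phi> r / 2"
        using Ckd \<phi>0[OF r] by (metis mult.commute mult.left_commute mult_left_mono times_divide_eq_right mult_1_right)
      ultimately show ?thesis unfolding step_def r'_def[symmetric] by (simp add: field_simps)
    qed
    have ind: "\<forall>r. 0 \<le> r \<longrightarrow> r \<le> T \<longrightarrow> r \<le> real k * \<delta> \<longrightarrow> \<phi> r \<le> B k" for k
    proof (induction k)
      case 0
      then show ?case using \<phi>zero unfolding B_def by auto
    next
      case (Suc k)
      show ?case
      proof (intro allI impI)
        fix r assume r: "0 \<le> r" "r \<le> T" "r \<le> real (Suc k) * \<delta>"
        have "\<phi> (max (r - \<delta>) 0) \<le> B k"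
        proof (rule Suc.IH[rule_format])
          show "0 \<le> max (r - \<delta>) 0" by simp
          show "max (r - \<delta>) 0 \<le> T" using r d0 T_pos by simp
          have "real k * \<delta> \<ge> 0" using d0 by simp
          moreover have "r - \<delta> \<le> real k * \<delta>" using r(3) by (simp add: algebra_simps)
          ultimately show "max (r - \<delta>) 0 \<le> real k * \<delta>" by simp
        qed
        then have "step (\<phi> (max (r - \<delta>) 0)) \<le> step (B k)"
          unfolding step_def using C0 kT0 by (simp add: mult_left_mono)
        then show "\<phi> r \<le> B (Suc k)" using key[OF r(1,2)] unfolding B_def by simp
      qed
    qed
    have "t \<in> Part T" using tP unfolding Part_def by auto
    then have "S t \<le> \<phi> T" using Sle by simp
    also have "\<phi> T \<le> B m" using ind[of m] T_pos TmD by auto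
    finally show "(\<Sum>i<n. norm (X0 (t (Suc i)) - X0 (t i))) \<le> B m" unfolding S_def .
  qed
qed

end
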